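(* Let $\Sigma$ be an alphabet with at least three letters and $n\geq 1$. Let $f,g\colon\mathcal{T}(\Sigma)^n\to\mathcal{T}(\Sigma)$ be congruence preserving functions such that $f(a_1,\ldots,a_n)=g(a_1,\ldots,a_n)$ for all $a_1,\ldots,a_n\in\Sigma$. Then $f(t_1,\ldots,t_n)=g(t_1,\ldots,t_n)$ for all $t_1,\ldots,t_n\in\mathcal{T}(\Sigma)$.
   Context: Let $\Sigma$ be an alphabet not containing $0,1$. A binary tree over $\Sigma$ is a finite set $t \subseteq \{0,1\}^*\Sigma$ such that for any $ua, vb \in t$ with $ua \neq vb$, $u$ is not a prefix of $v$ and $v$ is not a prefix of $u$; $\mathcal{T}(\Sigma)$ is the set of such trees, $\mathbf 0=\emptyset$, each letter $a$ is identified with $\{a\}$, and $t\star t' = 0.t\cup 1.t'$. A congruence is an equivalence relation on $\mathcal{T}(\Sigma)$ compatible with $\star$. A function $f\colon\mathcal{T}(\Sigma)^n\to\mathcal{T}(\Sigma)$ is congruence preserving if for every congruence $\sim$ and all $t_i,t_i'$, $t_i\sim t_i'$ for all $i=1,\ldots,n$ implies $f(t_1,\ldots,t_n)\sim f(t_1',\ldots,t_n')$. *)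

theory Defs
  imports Main "HOL-Library.Sublist"
begin

text \<open>A word u a in {0,1}^* Sigma is represented as the pair (u, a), where u is a
bool list (False = 0, True = 1) and a is a letter of the alphabet type 'a.\<close>

definition is_bintree :: "(bool list \<times> 'a) set \<Rightarrow> bool" where
  "is_bintree t \<longleftrightarrow> finite t \<and>
     (\<forall>u a v b. (u, a) \<in> t \<longrightarrow> (v, b) \<in> t \<longrightarrow> (u, a) \<noteq> (v, b) \<longrightarrow>
        \<not> prefix u v \<and> \<not> prefix v u)"

typedef 'a bintree = "{t :: (bool list \<times> 'a) set. is_bintree t}"
  by (rule exI[of _ "{}"]) (simp add: is_bintree_def)

definition tree_star :: "'a bintree \<Rightarrow> 'a bintree \<Rightarrow> 'a bintree" where
  "tree_star t t' = Abs_bintree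
     ((\<lambda>(u, a). (False # u, a)) ` Rep_bintree t \<union> (\<lambda>(u, a). (True # u, a)) ` Rep_bintree t')"

definition tree_leaf :: "'a \<Rightarrow> 'a bintree" where
  "tree_leaf a = Abs_bintree {([], a)}"

definition tree_congruence :: "('a bintree \<times> 'a bintree) set \<Rightarrow> bool" where
  "tree_congruence R \<longleftrightarrow> equiv UNIV R \<and>
     (\<forall>s s' t t'. (s, s') \<in> R \<longrightarrow> (t, t') \<in> R \<longrightarrow> (tree_star s t, tree_star s' t') \<in> R)"

text \<open>An n-ary function T(Sigma)^n -> T(Sigma) is represented as a function on lists,
of which only the values on lists of length n matter.\<close>

definition congruence_preserving :: "nat \<Rightarrow> ('a bintree list \<Rightarrow> 'a bintree) \<Rightarrow> bool" where
  "congruence_preserving n f \<longleftrightarrow>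
     (\<forall>R. tree_congruence R \<longrightarrow>
       (\<forall>ts ts'. length ts = n \<longrightarrow> length ts' = n \<longrightarrow>
          list_all2 (\<lambda>x y. (x, y) \<in> R) ts ts' \<longrightarrow> (f ts, f ts') \<in> R))"

end

theory Submission
  imports Defs
begin

definition Lb :: "bool \<Rightarrow> (bool list \<times> 'a) set \<Rightarrow> (bool list \<times> 'a) set" where
  "Lb b S = (\<lambda>(u, a). (b # u, a)) ` S"

lemma bintree_union:
  assumes "is_bintree A" "is_bintree B"
  shows "is_bintree (Lb False A \<union> Lb True B)"
  using assms unfolding is_bintree_def Lb_def by (auto; blast)

lemma Rep_star:
  "Rep_bintree (tree_star x y) = Lb False (Rep_bintree x) \<union> Lb True (Rep_bintree y)"
proof -
  have "is_bintree (Lb False (Rep_bintree x) \<union> Lb True (Rep_bintree y))"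
    using bintree_union Rep_bintree by blast
  then show ?thesis unfolding tree_star_def Lb_def
    by (simp add: Abs_bintree_inverse)
qed

lemma Rep_leaf: "Rep_bintree (tree_leaf a) = {([], a)}"
proof -
  have "is_bintree {([], a)}" unfolding is_bintree_def by auto
  then show ?thesis unfolding tree_leaf_def by (simp add: Abs_bintree_inverse)
qed

lemma Rep_bt: "is_bintree (Rep_bintree x)"
  using Rep_bintree by blast

definition sub :: "'a \<Rightarrow> (bool list \<times> 'a) set \<Rightarrow> (bool list \<times> 'a) set \<Rightarrow> (bool list \<times> 'a) set" where
  "sub s T A = {p \<in> A. snd p \<noteq> s} \<union> {(u @ w, b) | u w b. (u, s) \<in> A \<and> (w, b) \<in> T}"

lemma sub_Un: "sub s T (A \<union> B) = sub s T A \<union> sub s T B"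
  unfolding sub_def by blast

lemma mem_Lb: "p \<in> Lb b S \<longleftrightarrow> (\<exists>u a. p = (b # u, a) \<and> (u, a) \<in> S)"
  unfolding Lb_def by auto

lemma mem_sub: "(v, c) \<in> sub s T A \<longleftrightarrow> ((v, c) \<in> A \<and> c \<noteq> s) \<or> (\<exists>u w. v = u @ w \<and> (u, s) \<in> A \<and> (w, c) \<in> T)"
  unfolding sub_def by auto

lemma sub_Lb: "sub s T (Lb b A) = Lb b (sub s T A)"
proof (rule set_eqI)
  fix p :: "bool list \<times> 'a"
  obtain v c where p: "p = (v, c)" by fastforce
  show "p \<in> sub s T (Lb b A) \<longleftrightarrow> p \<in> Lb b (sub s T A)"
  proof
    assume "p \<in> sub s T (Lb b A)"
    then have "((v, c) \<in> Lb b A \<and> c \<noteq> s) \<or> (\<exists>u w. v = u @ w \<and> (u, s) \<in> Lb b A \<and> (w, c) \<in> T)"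
      using p mem_sub by metis
    then show "p \<in> Lb b (sub s T A)"
    proof
      assume "(v, c) \<in> Lb b A \<and> c \<noteq> s"
      then obtain u where "v = b # u" "(u, c) \<in> A" "c \<noteq> s" unfolding mem_Lb by auto
      then show ?thesis unfolding p mem_Lb by (auto simp: mem_sub)
    next
      assume "\<exists>u w. v = u @ w \<and> (u, s) \<in> Lb b A \<and> (w, c) \<in> T"
      then obtain u w where "v = b # u @ w" "(u, s) \<in> A" "(w, c) \<in> T" unfolding mem_Lb by auto
      then show ?thesis unfolding p mem_Lb mem_sub by blast
    qed
  next
    assume "p \<in> Lb b (sub s T A)"
    then obtain v' where v': "v = b # v'" "(v', c) \<in> sub s T A" unfolding p mem_Lb by auto
    then have "((v', c) \<in> A \<and> c \<noteq> s) \<or> (\<exists>u w. v' = u @ w \<and> (u, s) \<in> A \<and> (w, c) \<in> T)"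
      using mem_sub by metis
    then show "p \<in> sub s T (Lb b A)"
    proof
      assume "(v', c) \<in> A \<and> c \<noteq> s"
      then show ?thesis unfolding p v' mem_sub mem_Lb by blast
    next
      assume "\<exists>u w. v' = u @ w \<and> (u, s) \<in> A \<and> (w, c) \<in> T"
      then obtain u w where "v' = u @ w" "(u, s) \<in> A" "(w, c) \<in> T" by blast
      then have "v = (b # u) @ w" "(b # u, s) \<in> Lb b A" using v' unfolding mem_Lb by auto
      then show ?thesis unfolding p mem_sub using \<open>(w, c) \<in> T\<close> by blast
    qed
  qed
qed

lemma sub_nolabel:
  assumes "s \<notin> snd ` A"
  shows "sub s T A = A"
proof -
  have 1: "(u, s) \<notin> A" for u
  proof
    assume "(u, s) \<in> A"
    then have "snd (u, s) \<in> snd ` A" by (rule imageI)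
    then show False using assms by simp
  qed
  have 2: "snd p \<noteq> s" if "p \<in> A" for p using assms that by blast
  show ?thesis unfolding sub_def using 1 2 by auto
qed

definition FS :: "'a \<Rightarrow> (bool list \<times> 'a) set \<Rightarrow> 'a bintree \<Rightarrow> (bool list \<times> 'a) set" where
  "FS s T x = sub s T (Rep_bintree x)"

lemma FS_star: "FS s T (tree_star x y) = Lb False (FS s T x) \<union> Lb True (FS s T y)"
  unfolding FS_def Rep_star sub_Un sub_Lb ..

lemma kernel_tc:
  assumes "\<And>x x' y y'. F x = F x' \<Longrightarrow> F y = F y' \<Longrightarrow> F (tree_star x y) = F (tree_star x' y')"
  shows "tree_congruence {(x, y). F x = F y}"
proof -
  have "equiv UNIV {(x, y). F x = F y}"
    by (rule equivI) (auto intro: refl_onI symI transI)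
  then show ?thesis unfolding tree_congruence_def using assms by blast
qed

lemma cp_apply:
  assumes "congruence_preserving n f"
    and "\<And>x x' y y'. F x = F x' \<Longrightarrow> F y = F y' \<Longrightarrow> F (tree_star x y) = F (tree_star x' y')"
    and "length ts = n" "length ts' = n" "list_all2 (\<lambda>x y. F x = F y) ts ts'"
  shows "F (f ts) = F (f ts')"
proof -
  have tc: "tree_congruence {(x, y). F x = F y}" using kernel_tc assms(2) by blast
  have "list_all2 (\<lambda>x y. (x, y) \<in> {(x, y). F x = F y}) ts ts'" using assms(5) by simp
  moreover have "\<And>R. tree_congruence R \<Longrightarrow> length ts = n \<Longrightarrow> length ts' = n \<Longrightarrow>
      list_all2 (\<lambda>x y. (x, y) \<in> R) ts ts' \<Longrightarrow> (f ts, f ts') \<in> R"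
    using assms(1) unfolding congruence_preserving_def by blast
  ultimately have "(f ts, f ts') \<in> {(x, y). F x = F y}"
    using tc assms(3,4) by blast
  then show ?thesis by simp
qed

lemma step_eq:
  assumes "congruence_preserving n f" "congruence_preserving n g"
    and "length ts = n" "j < n" "FS s T (ts ! j) = FS s T x"
    and "f (ts[j := x]) = g (ts[j := x])"
  shows "FS s T (f ts) = FS s T (g ts)"
proof -
  have comp: "\<And>x x' y y'. FS s T x = FS s T x' \<Longrightarrow> FS s T y = FS s T y' \<Longrightarrow>
     FS s T (tree_star x y) = FS s T (tree_star x' y')"
    by (simp add: FS_star)
  have ln: "length (ts[j := x]) = n" using assms(3) by simp
  have la: "list_all2 (\<lambda>x y. FS s T x = FS s T y) ts (ts[j := x])"
  proof (rule list_all2_all_nthI)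
    show "length ts = length (ts[j := x])" by simp
  next
    fix i assume "i < length ts"
    show "FS s T (ts ! i) = FS s T (ts[j := x] ! i)"
    proof (cases "i = j")
      case True
      then show ?thesis using assms(3,4,5) by simp
    next
      case False
      then show ?thesis by simp
    qed
  qed
  have "FS s T (f ts) = FS s T (f (ts[j := x]))"
    by (rule cp_apply[OF assms(1) comp assms(3) ln la])
  moreover have "FS s T (g ts) = FS s T (g (ts[j := x]))"
    by (rule cp_apply[OF assms(2) comp assms(3) ln la])
  ultimately show ?thesis using assms(6) by simp
qed

lemma sep_core:
  assumes "(u, a) \<in> A" "a \<noteq> sa" "sa \<noteq> sb" "sa \<notin> snd ` T" "is_bintree A"
    and "sub sa T A = sub sa T B" "sub sb T A = sub sb T B"
  shows "(u, a) \<in> B"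
proof -
  have "(u, a) \<in> sub sa T A" using assms(1,2) unfolding sub_def by auto
  then have "(u, a) \<in> sub sa T B" using assms(6) by simp
  then have "(u, a) \<in> B \<or> (\<exists>u' w. u = u' @ w \<and> (u', sa) \<in> B \<and> (w, a) \<in> T)"
    unfolding sub_def by auto
  then show ?thesis
  proof
    assume "\<exists>u' w. u = u' @ w \<and> (u', sa) \<in> B \<and> (w, a) \<in> T"
    then obtain u' w where uw: "u = u' @ w" "(u', sa) \<in> B" by blast
    have "(u', sa) \<in> sub sb T B" using uw(2) assms(3) unfolding sub_def by auto
    then have "(u', sa) \<in> sub sb T A" using assms(7) by simp
    then have "(u', sa) \<in> A" using assms(4) unfolding sub_def by force
    moreover have "(u', sa) \<noteq> (u, a)" using assms(2) by auto
    moreover have "prefix u' u" using uw(1) by (simp add: prefixI)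
    ultimately have False using assms(1,5) unfolding is_bintree_def by blast
    then show ?thesis ..
  qed
qed

lemma sep:
  assumes "s1 \<noteq> s2" "s1 \<notin> snd ` T" "s2 \<notin> snd ` T" "is_bintree A" "is_bintree B"
    and "sub s1 T A = sub s1 T B" "sub s2 T A = sub s2 T B"
  shows "A = B"
proof -
  have half: "A' \<subseteq> B'" if "is_bintree A'" "sub s1 T A' = sub s1 T B'" "sub s2 T A' = sub s2 T B'"
    for A' B'
  proof
    fix p assume p: "p \<in> A'"
    obtain u a where [simp]: "p = (u, a)" by fastforce
    show "p \<in> B'"
    proof (cases "a = s1")
      case True
      then have "a \<noteq> s2" using assms(1) by simp
      then show ?thesis using sep_core[of u a A' s2 s1 T B'] p that assms by auto
    next
      case False
      then show ?thesis using sep_core[of u a A' s1 s2 T B'] p that assms by auto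
    qed
  qed
  show ?thesis using half[of A B] half[of B A] assms by auto
qed

definition isl :: "'a bintree \<Rightarrow> bool" where
  "isl x \<longleftrightarrow> (\<exists>a. x = tree_leaf a)"

definition mu :: "'a bintree \<Rightarrow> nat" where
  "mu x = (if isl x then 0 else Suc (card (Rep_bintree x)))"

definition msum :: "'a bintree list \<Rightarrow> nat" where
  "msum ts = sum_list (map mu ts)"

lemma msum_update: "j < length ts \<Longrightarrow> msum (ts[j := x]) + mu (ts ! j) = msum ts + mu x"
proof (induction ts arbitrary: j)
  case Nil then show ?case by simp
next
  case (Cons t ts)
  then show ?case by (cases j) (auto simp: msum_def)
qed

theorem mainTheorem5:
  fixes f g :: "('a::finite) bintree list \<Rightarrow> 'a bintree" and n :: nat
  assumes "card (UNIV :: 'a set) \<ge> 3"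
    and "n \<ge> 1"
    and "congruence_preserving n f"
    and "congruence_preserving n g"
    and "\<forall>as :: 'a list. length as = n \<longrightarrow> f (map tree_leaf as) = g (map tree_leaf as)"
  shows "\<forall>ts. length ts = n \<longrightarrow> f ts = g ts"
proof
  fix ts :: "'a bintree list"
  show "length ts = n \<longrightarrow> f ts = g ts"
  proof (induction ts rule: measure_induct_rule[where f = msum])
    case (less ts)
    show ?case
    proof
      assume len: "length ts = n"
      have IH: "f ts' = g ts'" if "length ts' = n" "msum ts' < msum ts" for ts'
        using less that by blast
      show "f ts = g ts"
      proof (cases "msum ts = 0")
        case True
        then have "\<forall>x\<in>set ts. mu x = 0" unfolding msum_def by simp
        then have allx: "\<forall>x\<in>set ts. isl x" unfolding mu_def by (auto split: if_splits)
        define h where "h x = (SOME a. x = tree_leaf a)" for x :: "'a bintree"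
        have "map tree_leaf (map h ts) = ts"
        proof -
          have "map (tree_leaf \<circ> h) ts = ts"
          proof (rule map_idI)
            fix x assume "x \<in> set ts"
            then have "\<exists>a. x = tree_leaf a" using allx unfolding isl_def by blast
            then have "x = tree_leaf (h x)" unfolding h_def by (rule someI_ex)
            then show "(tree_leaf \<circ> h) x = x" by simp
          qed
          then show ?thesis by simp
        qed
        moreover have "length (map h ts) = n" using len by simp
        ultimately show ?thesis using assms(5) by metis
      next
        case False
        then obtain x where "x \<in> set ts" "mu x \<noteq> 0" unfolding msum_def by auto
        then obtain j where j: "j < length ts" "mu (ts ! j) \<noteq> 0"
          by (metis in_set_conv_nth)
        define t where "t = ts ! j"
        have nl: "\<not> isl t" using j(2) unfolding t_def mu_def by auto
        have mut: "mu t = Suc (card (Rep_bintree t))" using nl unfolding mu_def by simp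
        have fin: "finite (Rep_bintree t)" using Rep_bt[of t] unfolding is_bintree_def by blast
        have jn: "j < n" using j len by simp
        define L where "L = snd ` Rep_bintree t"
        have finL: "finite L" using fin unfolding L_def by simp
        show ?thesis
        proof (cases "card L \<ge> 2")
          case True
          have key: "FS l {} (f ts) = FS l {} (g ts)" if lL: "l \<in> L" for l
          proof -
            define S where "S = {p \<in> Rep_bintree t. snd p \<noteq> l}"
            have bS: "is_bintree S" using Rep_bt[of t] fin unfolding is_bintree_def S_def by auto
            define x' where "x' = Abs_bintree S"
            have Rx: "Rep_bintree x' = S" unfolding x'_def using bS by (simp add: Abs_bintree_inverse)
            have "S \<subset> Rep_bintree t" using lL unfolding S_def L_def by force
            then have "card S < card (Rep_bintree t)" using fin by (simp add: psubset_card_mono)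
            then have "mu x' < mu t" using mut Rx unfolding mu_def by auto
            then have "msum (ts[j := x']) < msum ts" using msum_update[OF j(1), of x'] t_def by simp
            then have eq: "f (ts[j := x']) = g (ts[j := x'])" using IH len by simp
            have "FS l {} (ts ! j) = FS l {} x'" unfolding FS_def sub_def Rx S_def t_def by auto
            then show ?thesis using step_eq[OF assms(3,4) len jn _ eq] by simp
          qed
          have "\<not> card L \<le> Suc 0" using True by simp
          then have "\<not> (\<forall>a\<in>L. \<forall>b\<in>L. a = b)" using card_le_Suc0_iff_eq[OF finL] by simp
          then obtain l1 l2 where "l1 \<in> L" "l2 \<in> L" "l1 \<noteq> l2" by blast
          have k1: "sub l1 {} (Rep_bintree (f ts)) = sub l1 {} (Rep_bintree (g ts))"
            using key[OF \<open>l1 \<in> L\<close>] unfolding FS_def .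
          have k2: "sub l2 {} (Rep_bintree (f ts)) = sub l2 {} (Rep_bintree (g ts))"
            using key[OF \<open>l2 \<in> L\<close>] unfolding FS_def .
          have "Rep_bintree (f ts) = Rep_bintree (g ts)"
            by (rule sep[OF \<open>l1 \<noteq> l2\<close> _ _ Rep_bt Rep_bt k1 k2]) simp_all
          then show ?thesis by (simp add: Rep_bintree_inject)
        next
          case False
          have "card (UNIV - L) \<ge> 2"
            using False assms(1) finL by (simp add: card_Diff_subset)
          then have "\<not> card (UNIV - L) \<le> Suc 0" by simp
          then have "\<not> (\<forall>a\<in>UNIV - L. \<forall>b\<in>UNIV - L. a = b)"
            using card_le_Suc0_iff_eq[of "UNIV - L"] by simp
          then obtain s1 s2 where s12: "s1 \<notin> L" "s2 \<notin> L" "s1 \<noteq> s2" by blast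
          have key: "FS s (Rep_bintree t) (f ts) = FS s (Rep_bintree t) (g ts)" if sL: "s \<notin> L" for s
          proof -
            have "mu (tree_leaf s) = 0" unfolding mu_def isl_def by auto
            then have "msum (ts[j := tree_leaf s]) < msum ts"
              using msum_update[OF j(1), of "tree_leaf s"] t_def mut by simp
            then have eq: "f (ts[j := tree_leaf s]) = g (ts[j := tree_leaf s])" using IH len by simp
            have "FS s (Rep_bintree t) t = Rep_bintree t"
              using sL unfolding FS_def L_def by (simp add: sub_nolabel)
            moreover have "FS s (Rep_bintree t) (tree_leaf s) = Rep_bintree t"
              unfolding FS_def sub_def Rep_leaf by auto
            ultimately have "FS s (Rep_bintree t) (ts ! j) = FS s (Rep_bintree t) (tree_leaf s)"
              unfolding t_def by simp
            then show ?thesis using step_eq[OF assms(3,4) len jn _ eq] by simp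
          qed
          have k1: "sub s1 (Rep_bintree t) (Rep_bintree (f ts)) = sub s1 (Rep_bintree t) (Rep_bintree (g ts))"
            using key[OF s12(1)] unfolding FS_def .
          have k2: "sub s2 (Rep_bintree t) (Rep_bintree (f ts)) = sub s2 (Rep_bintree t) (Rep_bintree (g ts))"
            using key[OF s12(2)] unfolding FS_def .
          have "Rep_bintree (f ts) = Rep_bintree (g ts)"
            by (rule sep[OF s12(3) _ _ Rep_bt Rep_bt k1 k2]) (use s12 in \<open>simp_all add: L_def\<close>)
          then show ?thesis by (simp add: Rep_bintree_inject)
        qed
      qed
    qed
  qed
qed

end
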